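(* Let $X$ be a Polish space and let $\delta_1,\delta_2,\delta_3$ be regular derivations on the closed subsets of $X$ such that $\delta_1(P)\subseteq\delta_2(P)\cup\delta_3(P)$ for every closed set $P$. Then for every countable ordinal $\alpha$ and every closed set $P$, $\delta_1^{\omega^\alpha}(P)\subseteq\delta_2^{\omega^\alpha}(P)\cup\delta_3^{\omega^\alpha}(P)$.
   Context: A derivation is a map $\delta$ from the closed subsets of $X$ to closed subsets with $\delta(P)\subseteq P$; iterates: $\delta^0(P)=P$, $\delta^{\alpha+1}(P)=\delta(\delta^\alpha(P))$, $\delta^\alpha(P)=\bigcap_{\alpha'<\alpha}\delta^{\alpha'}(P)$ for limit $\alpha$. A derivation is regular if (a) $P\subseteq Q$ implies $\delta(P)\subseteq\delta(Q)$, and (b) $\delta(P\cup Q)\subseteq\delta(P)\cup\delta(Q)$, for all closed $P,Q$. *)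

theory Defs
  imports "HOL-Analysis.Analysis"
begin

definition derivation :: "('x::topological_space set \<Rightarrow> 'x set) \<Rightarrow> bool" where
  "derivation \<delta> \<longleftrightarrow> (\<forall>P. closed P \<longrightarrow> closed (\<delta> P) \<and> \<delta> P \<subseteq> P)"

definition regular_derivation :: "('x::topological_space set \<Rightarrow> 'x set) \<Rightarrow> bool" where
  "regular_derivation \<delta> \<longleftrightarrow> derivation \<delta>
     \<and> (\<forall>P Q. closed P \<longrightarrow> closed Q \<longrightarrow> P \<subseteq> Q \<longrightarrow> \<delta> P \<subseteq> \<delta> Q)
     \<and> (\<forall>P Q. closed P \<longrightarrow> closed Q \<longrightarrow> \<delta> (P \<union> Q) \<subseteq> \<delta> P \<union> \<delta> Q)"

text \<open>Ordinals are represented by well-orders (Well_order r); the ordinal is the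
  order type of r.  Strict predecessors and maximal elements:\<close>

definition strict_below :: "'i rel \<Rightarrow> 'i \<Rightarrow> 'i set" where
  "strict_below r x = {y. (y, x) \<in> r \<and> y \<noteq> x}"

definition is_max :: "'i rel \<Rightarrow> 'i set \<Rightarrow> 'i \<Rightarrow> bool" where
  "is_max r S m \<longleftrightarrow> m \<in> S \<and> (\<forall>z\<in>S. (z, m) \<in> r)"

text \<open>deriv_iter_at d r P x is the iterate of d of length equal to the order type
  of the strict initial segment of r below x (transfinite recursion:
  0 gives P, successor gives d of the previous iterate, limit gives intersection).\<close>

definition deriv_iter_at :: "('x set \<Rightarrow> 'x set) \<Rightarrow> 'i rel \<Rightarrow> 'x set \<Rightarrow> 'i \<Rightarrow> 'x set" where
  "deriv_iter_at d r P = wfrec (r - Id) (\<lambda>F x.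
     if strict_below r x = {} then P
     else if (\<exists>y. is_max r (strict_below r x) y)
       then d (F (THE y. is_max r (strict_below r x) y))
     else \<Inter> (F ` strict_below r x))"

text \<open>deriv_iter d r P is the iterate of d of length the order type of r.\<close>

definition deriv_iter :: "('x set \<Rightarrow> 'x set) \<Rightarrow> 'i rel \<Rightarrow> 'x set \<Rightarrow> 'x set" where
  "deriv_iter d r P =
     (if Field r = {} then P
      else if (\<exists>m. is_max r (Field r) m)
        then d (deriv_iter_at d r P (THE m. is_max r (Field r) m))
      else \<Inter> (deriv_iter_at d r P ` Field r))"

text \<open>Ordinal exponentiation omega^alpha (alpha the order type of r): finitely supported
  functions from Field r to nat (Cantor normal form), compared at the r-largest
  position where they differ.\<close>

definition fin_supp :: "'i rel \<Rightarrow> ('i \<Rightarrow> nat) set" where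
  "fin_supp r = {f. finite {x. f x \<noteq> 0} \<and> (\<forall>x. f x \<noteq> 0 \<longrightarrow> x \<in> Field r)}"

definition omega_exp :: "'i rel \<Rightarrow> ('i \<Rightarrow> nat) rel" where
  "omega_exp r = {(f, g). f \<in> fin_supp r \<and> g \<in> fin_supp r \<and>
     (f = g \<or> (\<exists>x\<in>Field r. f x < g x \<and>
        (\<forall>y\<in>Field r. (x, y) \<in> r \<and> y \<noteq> x \<longrightarrow> f y = g y)))}"

end

theory Submission
  imports Defs "HOL-Library.Multiset"
begin


lemma iter_unfold_gen:
  assumes wf: "wf (S - Id)" and anti: "antisym S"
  shows "deriv_iter_at d S P x =
    (if strict_below S x = {} then P
     else if (\<exists>y. is_max S (strict_below S x) y)
       then d (deriv_iter_at d S P (THE y. is_max S (strict_below S x) y))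
     else \<Inter> (deriv_iter_at d S P ` strict_below S x))"
proof -
  let ?F = "(\<lambda>F x.
     if strict_below S x = {} then P
     else if (\<exists>y. is_max S (strict_below S x) y)
       then d (F (THE y. is_max S (strict_below S x) y))
     else \<Inter> (F ` strict_below S x))"
  have uniq: "\<And>x y y'. is_max S (strict_below S x) y \<Longrightarrow> is_max S (strict_below S x) y' \<Longrightarrow> y = y'"
    using anti unfolding is_max_def antisym_def by blast
  have adm: "adm_wf (S - Id) ?F"
    unfolding adm_wf_def
  proof (intro allI impI)
    fix f g :: "'a \<Rightarrow> 'b set" and x
    assume agree: "\<forall>z. (z, x) \<in> S - Id \<longrightarrow> f z = g z"
    have sb: "\<And>z. z \<in> strict_below S x \<Longrightarrow> f z = g z"
      using agree unfolding strict_below_def by auto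
    show "?F f x = ?F g x"
    proof (cases "\<exists>y. is_max S (strict_below S x) y")
      case True
      then obtain y where y: "is_max S (strict_below S x) y" by blast
      hence "(THE y. is_max S (strict_below S x) y) = y" using uniq by blast
      moreover have "y \<in> strict_below S x" using y unfolding is_max_def by auto
      ultimately have "f (THE y. is_max S (strict_below S x) y) = g (THE y. is_max S (strict_below S x) y)"
        using sb by simp
      thus ?thesis using True by simp
    next
      case False
      have im: "f ` strict_below S x = g ` strict_below S x" using sb by (rule image_cong[OF refl])
      have e: "(\<exists>y. is_max S (strict_below S x) y) = False" using False by simp
      show ?thesis by (simp only: e if_False im)
    qed
  qed
  show ?thesis
    unfolding deriv_iter_at_def by (subst wfrec_fixpoint[OF wf adm]) simp
qed

locale wo =
  fixes r :: "'i rel"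
  assumes WO: "Well_order r"
begin

lemma r_props: "trans r" "antisym r" "refl_on (Field r) r" "total_on (Field r) r" "wf (r - Id)"
  using WO unfolding well_order_on_def linear_order_on_def partial_order_on_def preorder_on_def
  by simp_all

lemma r_trans: "(x,y) \<in> r \<Longrightarrow> (y,z) \<in> r \<Longrightarrow> (x,z) \<in> r"
  using r_props(1) by (rule transD)

lemma r_antisym: "(x,y) \<in> r \<Longrightarrow> (y,x) \<in> r \<Longrightarrow> x = y"
  using r_props(2) by (rule antisymD)

lemma r_refl: "x \<in> Field r \<Longrightarrow> (x,x) \<in> r"
  using r_props(3) unfolding refl_on_def by simp

lemma r_total: "x \<in> Field r \<Longrightarrow> y \<in> Field r \<Longrightarrow> (x,y) \<in> r \<or> (y,x) \<in> r"
  using r_props(4) r_refl unfolding total_on_def by (cases "x = y") auto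

lemma r_wf: "wf (r - Id)"
  using r_props(5) .

lemma r_field: "(x,y) \<in> r \<Longrightarrow> x \<in> Field r \<and> y \<in> Field r"
  by (auto simp: Field_def)

lemma finite_max:
  assumes "finite D" "D \<noteq> {}" "D \<subseteq> Field r"
  shows "\<exists>m\<in>D. \<forall>z\<in>D. (z,m) \<in> r"
  using assms
proof (induction D rule: finite_ne_induct)
  case (singleton x) thus ?case using r_refl by auto
next
  case (insert x F)
  then obtain m where m: "m \<in> F" "\<forall>z\<in>F. (z,m) \<in> r" by auto
  have xF: "x \<in> Field r" and mF: "m \<in> Field r" using insert m by auto
  from r_total[OF xF mF] show ?case
  proof
    assume "(x,m) \<in> r" thus ?thesis using m by auto
  next
    assume xm: "(m,x) \<in> r"
    have "\<forall>z\<in>insert x F. (z,x) \<in> r"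
    proof
      fix z assume "z \<in> insert x F"
      thus "(z,x) \<in> r"
      proof
        assume "z = x" thus ?thesis using r_refl xF by simp
      next
        assume "z \<in> F" thus ?thesis using m xm r_trans by blast
      qed
    qed
    thus ?thesis by blast
  qed
qed

definition lt :: "('i \<Rightarrow> nat) \<Rightarrow> ('i \<Rightarrow> nat) \<Rightarrow> bool" where
  "lt f g \<longleftrightarrow> f \<in> fin_supp r \<and> g \<in> fin_supp r \<and>
     (\<exists>x\<in>Field r. f x < g x \<and> (\<forall>y\<in>Field r. (x, y) \<in> r \<and> y \<noteq> x \<longrightarrow> f y = g y))"

lemma R_iff: "(f,g) \<in> omega_exp r \<longleftrightarrow> f \<in> fin_supp r \<and> g \<in> fin_supp r \<and> (f = g \<or> lt f g)"
  unfolding omega_exp_def lt_def by auto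

lemma lt_neq: "lt f g \<Longrightarrow> f \<noteq> g"
  unfolding lt_def by auto

lemma R_diff: "omega_exp r - Id = {(f,g). lt f g}"
  using R_iff lt_neq lt_def by auto

lemma fs_zero: "f \<in> fin_supp r \<Longrightarrow> x \<notin> Field r \<Longrightarrow> f x = 0"
  unfolding fin_supp_def by auto

lemma fs_finite: "f \<in> fin_supp r \<Longrightarrow> finite {x. f x \<noteq> 0}"
  unfolding fin_supp_def by auto

lemma lt_trans: assumes "lt f g" "lt g h" shows "lt f h"
proof -
  obtain x where x: "x \<in> Field r" "f x < g x" "\<forall>y\<in>Field r. (x, y) \<in> r \<and> y \<noteq> x \<longrightarrow> f y = g y"
    using assms(1) unfolding lt_def by blast
  obtain z where z: "z \<in> Field r" "g z < h z" "\<forall>y\<in>Field r. (z, y) \<in> r \<and> y \<noteq> z \<longrightarrow> g y = h y"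
    using assms(2) unfolding lt_def by blast
  have fs: "f \<in> fin_supp r" "h \<in> fin_supp r" using assms unfolding lt_def by auto
  consider "x = z" | "(z,x) \<in> r" "x \<noteq> z" | "(x,z) \<in> r" "x \<noteq> z" using r_total x z by blast
  thus ?thesis
  proof cases
    case 1 thus ?thesis using x z fs unfolding lt_def by (intro conjI bexI[of _ x]) auto
  next
    case 2
    have "f x < h x" using x z 2 by auto
    moreover have "\<forall>y\<in>Field r. (x, y) \<in> r \<and> y \<noteq> x \<longrightarrow> f y = h y"
    proof (intro ballI impI)
      fix y assume y: "y \<in> Field r" "(x, y) \<in> r \<and> y \<noteq> x"
      have "(z,y) \<in> r" using r_trans 2 y by blast
      moreover have "y \<noteq> z" using y 2 r_antisym by blast
      ultimately show "f y = h y" using x z y by auto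
    qed
    ultimately show ?thesis using fs x unfolding lt_def by blast
  next
    case 3
    have "f z < h z" using x z 3 by auto
    moreover have "\<forall>y\<in>Field r. (z, y) \<in> r \<and> y \<noteq> z \<longrightarrow> f y = h y"
    proof (intro ballI impI)
      fix y assume y: "y \<in> Field r" "(z, y) \<in> r \<and> y \<noteq> z"
      have "(x,y) \<in> r" using r_trans 3 y by blast
      moreover have "y \<noteq> x" using y 3 r_antisym by blast
      ultimately show "f y = h y" using x z y by auto
    qed
    ultimately show ?thesis using fs z unfolding lt_def by blast
  qed
qed

lemma lt_irrefl: "\<not> lt f f"
  unfolding lt_def by auto

lemma lt_asym: "lt f g \<Longrightarrow> \<not> lt g f"
  using lt_trans lt_irrefl by blast

lemma lt_total:
  assumes "f \<in> fin_supp r" "g \<in> fin_supp r" "f \<noteq> g"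
  shows "lt f g \<or> lt g f"
proof -
  let ?D = "{x. f x \<noteq> g x}"
  have "?D \<subseteq> {x. f x \<noteq> 0} \<union> {x. g x \<noteq> 0}" by auto
  hence fin: "finite ?D" using fs_finite assms finite_subset by blast
  have ne: "?D \<noteq> {}" using assms(3) by auto
  have sub: "?D \<subseteq> Field r"
  proof
    fix x assume x: "x \<in> ?D"
    show "x \<in> Field r"
    proof (rule ccontr)
      assume "x \<notin> Field r"
      hence "f x = 0" "g x = 0" using fs_zero assms(1,2) by auto
      thus False using x by simp
    qed
  qed
  obtain m where m: "m \<in> ?D" "\<forall>z\<in>?D. (z,m) \<in> r" using finite_max[OF fin ne sub] by blast
  have mF: "m \<in> Field r" using m sub by auto
  have ab: "\<forall>y\<in>Field r. (m, y) \<in> r \<and> y \<noteq> m \<longrightarrow> f y = g y"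
  proof (intro ballI impI)
    fix y assume y: "y \<in> Field r" "(m, y) \<in> r \<and> y \<noteq> m"
    show "f y = g y"
    proof (rule ccontr)
      assume "f y \<noteq> g y"
      hence "(y,m) \<in> r" using m by simp
      thus False using y r_antisym by blast
    qed
  qed
  have ab': "\<forall>y\<in>Field r. (m, y) \<in> r \<and> y \<noteq> m \<longrightarrow> g y = f y" using ab by simp
  have "f m < g m \<or> g m < f m" using m by auto
  thus ?thesis
  proof
    assume "f m < g m" thus ?thesis unfolding lt_def using assms(1,2) mF ab by blast
  next
    assume "g m < f m" thus ?thesis unfolding lt_def using assms(1,2) mF ab' by blast
  qed
qed

lemma R_antisym: "antisym (omega_exp r)"
proof (rule antisymI)
  fix f g assume "(f,g) \<in> omega_exp r" "(g,f) \<in> omega_exp r"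
  hence "f = g \<or> lt f g" "g = f \<or> lt g f" using R_iff by auto
  thus "f = g" using lt_asym by blast
qed

definition mset_of :: "('i \<Rightarrow> nat) \<Rightarrow> 'i multiset" where
  "mset_of f = Abs_multiset f"

lemma count_mset_of: "finite {x. f x \<noteq> 0} \<Longrightarrow> count (mset_of f) = f"
  unfolding mset_of_def by (rule count_Abs_multiset) simp

lemma lt_mult: assumes "lt f g" shows "(mset_of f, mset_of g) \<in> mult (r - Id)"
proof -
  obtain x where x: "x \<in> Field r" "f x < g x" "\<forall>y\<in>Field r. (x, y) \<in> r \<and> y \<noteq> x \<longrightarrow> f y = g y"
    using assms unfolding lt_def by blast
  have fs: "f \<in> fin_supp r" "g \<in> fin_supp r" using assms unfolding lt_def by auto
  have ff: "finite {x. f x \<noteq> 0}" "finite {x. g x \<noteq> 0}" using fs fs_finite by auto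
  have f1: "finite {y. min (f y) (g y) \<noteq> 0}" by (rule finite_subset[OF _ ff(1)]) auto
  have f2: "finite {y. f y - g y \<noteq> 0}" by (rule finite_subset[OF _ ff(1)]) auto
  have f3: "finite {y. g y - f y \<noteq> 0}" by (rule finite_subset[OF _ ff(2)]) auto
  define I where "I = mset_of (\<lambda>y. min (f y) (g y))"
  define K where "K = mset_of (\<lambda>y. f y - g y)"
  define J where "J = mset_of (\<lambda>y. g y - f y)"
  have cI: "count I = (\<lambda>y. min (f y) (g y))" unfolding I_def using count_mset_of[OF f1] .
  have cK: "count K = (\<lambda>y. f y - g y)" unfolding K_def using count_mset_of[OF f2] .
  have cJ: "count J = (\<lambda>y. g y - f y)" unfolding J_def using count_mset_of[OF f3] .
  have e1: "I + K = mset_of f"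
    by (simp add: multiset_eq_iff cI cK count_mset_of[OF ff(1)] min_def)
  have e2: "I + J = mset_of g"
    by (simp add: multiset_eq_iff cI cJ count_mset_of[OF ff(2)] min_def)
  have "count J x \<noteq> 0" using x cJ by simp
  hence Jne: "J \<noteq> {#}" by (metis count_empty)
  have "\<forall>k \<in> set_mset K. \<exists>j \<in> set_mset J. (k, j) \<in> r - Id"
  proof
    fix k assume "k \<in> set_mset K"
    hence "0 < count K k" by (simp only: count_greater_zero_iff)
    hence k: "f k > g k" using cK by simp
    have kF: "k \<in> Field r"
    proof (rule ccontr)
      assume "k \<notin> Field r"
      hence "f k = 0" using fs_zero fs by auto
      thus False using k by simp
    qed
    have "k \<noteq> x" using k x by auto
    moreover have "\<not> ((x, k) \<in> r \<and> k \<noteq> x)" using x kF k by auto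
    ultimately have "(k, x) \<in> r" using r_total kF x by blast
    moreover have "0 < count J x" using x cJ by simp
    hence "x \<in> set_mset J" by (simp only: count_greater_zero_iff)
    ultimately show "\<exists>j \<in> set_mset J. (k, j) \<in> r - Id" using \<open>k \<noteq> x\<close> by blast
  qed
  from one_step_implies_mult[OF Jne this, of I] show ?thesis using e1 e2 by simp
qed

lemma R_wf: "wf (omega_exp r - Id)"
proof -
  have "omega_exp r - Id \<subseteq> inv_image (mult (r - Id)) mset_of"
    using R_diff lt_mult by auto
  moreover have "wf (inv_image (mult (r - Id)) mset_of)"
    by (rule wf_inv_image[OF wf_mult[OF r_wf]])
  ultimately show ?thesis by (rule wf_subset[rotated])
qed

lemma lt_wf: "wf {(f,g). lt f g}"
  using R_wf R_diff by simp

end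


lemma chain_inter:
  assumes tot: "\<And>i j. i \<in> S \<Longrightarrow> j \<in> S \<Longrightarrow> le i j \<or> le j i"
    and anti: "\<And>i j. i \<in> S \<Longrightarrow> j \<in> S \<Longrightarrow> le i j \<Longrightarrow> A j \<subseteq> A i \<and> B j \<subseteq> B i"
  shows "(\<Inter>i\<in>S. A i \<union> B i) \<subseteq> (\<Inter>i\<in>S. A i) \<union> (\<Inter>i\<in>S. B i)"
proof
  fix x assume x: "x \<in> (\<Inter>i\<in>S. A i \<union> B i)"
  show "x \<in> (\<Inter>i\<in>S. A i) \<union> (\<Inter>i\<in>S. B i)"
  proof (rule ccontr)
    assume "x \<notin> (\<Inter>i\<in>S. A i) \<union> (\<Inter>i\<in>S. B i)"
    then obtain i j where ij: "i \<in> S" "j \<in> S" "x \<notin> A i" "x \<notin> B j" by blast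
    from tot[OF ij(1,2)] show False
    proof
      assume "le i j" hence "A j \<subseteq> A i" using anti ij by blast
      thus False using x ij by blast
    next
      assume "le j i" hence "B i \<subseteq> B j" using anti ij by blast
      thus False using x ij by blast
    qed
  qed
qed

lemma cofinal_inter:
  assumes "\<And>t. t \<in> T \<Longrightarrow> \<phi> t \<in> S"
    and "\<And>s. s \<in> S \<Longrightarrow> \<exists>t\<in>T. le s (\<phi> t)"
    and "\<And>s c. s \<in> S \<Longrightarrow> c \<in> S \<Longrightarrow> le s c \<Longrightarrow> A c \<subseteq> A s"
  shows "(\<Inter>s\<in>S. A s) = (\<Inter>t\<in>T. A (\<phi> t))"
proof
  show "(\<Inter>s\<in>S. A s) \<subseteq> (\<Inter>t\<in>T. A (\<phi> t))" using assms(1) by blast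
next
  show "(\<Inter>t\<in>T. A (\<phi> t)) \<subseteq> (\<Inter>s\<in>S. A s)"
  proof
    fix x assume x: "x \<in> (\<Inter>t\<in>T. A (\<phi> t))"
    show "x \<in> (\<Inter>s\<in>S. A s)"
    proof
      fix s assume s: "s \<in> S"
      then obtain t where t: "t \<in> T" "le s (\<phi> t)" using assms(2) by blast
      have "A (\<phi> t) \<subseteq> A s" using assms(3)[OF s assms(1)[OF t(1)] t(2)] .
      thus "x \<in> A s" using x t by blast
    qed
  qed
qed

lemma regD_all:
  assumes "regular_derivation d"
  shows "\<forall>P. closed P \<longrightarrow> closed (d P) \<and> d P \<subseteq> P"
    "\<forall>P Q. closed P \<longrightarrow> closed Q \<longrightarrow> P \<subseteq> Q \<longrightarrow> d P \<subseteq> d Q"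
    "\<forall>P Q. closed P \<longrightarrow> closed Q \<longrightarrow> d (P \<union> Q) \<subseteq> d P \<union> d Q"
  using assms unfolding regular_derivation_def derivation_def by simp_all

lemma regD:
  assumes "regular_derivation d"
  shows "closed P \<Longrightarrow> closed (d P)" "closed P \<Longrightarrow> d P \<subseteq> P"
    "closed P \<Longrightarrow> closed Q \<Longrightarrow> P \<subseteq> Q \<Longrightarrow> d P \<subseteq> d Q"
    "closed P \<Longrightarrow> closed Q \<Longrightarrow> d (P \<union> Q) \<subseteq> d P \<union> d Q"
  using regD_all[OF assms] by simp_all

context wo
begin

abbreviation It :: "('x::topological_space set \<Rightarrow> 'x set) \<Rightarrow> 'x set \<Rightarrow> ('i \<Rightarrow> nat) \<Rightarrow> 'x set" where
  "It d P g \<equiv> deriv_iter_at d (omega_exp r) P g"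

definition ismax :: "('i \<Rightarrow> nat) \<Rightarrow> ('i \<Rightarrow> nat) \<Rightarrow> bool" where
  "ismax g y \<longleftrightarrow> lt y g \<and> (\<forall>z. lt z g \<longrightarrow> z = y \<or> lt z y)"

lemma lt_fs: "lt f g \<Longrightarrow> f \<in> fin_supp r \<and> g \<in> fin_supp r"
  unfolding lt_def by blast

lemma sb_R: "strict_below (omega_exp r) g = {f. lt f g}"
  unfolding strict_below_def using R_iff lt_neq lt_fs by blast

lemma ismax_R: "is_max (omega_exp r) {f. lt f g} y \<longleftrightarrow> ismax g y"
  unfolding is_max_def ismax_def using R_iff lt_fs by blast

lemma ismax_R': "is_max (omega_exp r) {f. lt f g} = ismax g"
  by (intro ext) (rule ismax_R)

lemma ismax_uniq: "ismax g y \<Longrightarrow> ismax g y' \<Longrightarrow> y = y'"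
  unfolding ismax_def using lt_asym by blast

lemma It_unfold:
  "It d P g = (if \<not>(\<exists>f. lt f g) then P else if \<exists>y. ismax g y then d (It d P (THE y. ismax g y))
     else \<Inter>(It d P ` {f. lt f g}))"
  by (subst iter_unfold_gen[OF R_wf R_antisym]) (simp only: sb_R ismax_R' Collect_empty_eq not_ex)

lemma It_bot: "\<not>(\<exists>f. lt f g) \<Longrightarrow> It d P g = P"
  by (subst It_unfold) simp

lemma It_succ: assumes "ismax g y" shows "It d P g = d (It d P y)"
proof -
  have "lt y g" using assms unfolding ismax_def by blast
  moreover have "(THE y. ismax g y) = y" using assms ismax_uniq by blast
  ultimately show ?thesis using assms by (subst It_unfold) auto
qed

lemma It_lim: assumes "lt f0 g" "\<not>(\<exists>y. ismax g y)"
  shows "It d P g = \<Inter>(It d P ` {f. lt f g})"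
  using assms by (subst It_unfold) auto

lemma lt_induct: "(\<And>g. (\<And>h. lt h g \<Longrightarrow> Q h) \<Longrightarrow> Q g) \<Longrightarrow> Q g"
  using wf_induct_rule[OF lt_wf, of Q] by auto

lemma It_closed_sub:
  assumes d: "regular_derivation d" and P: "closed P"
  shows "closed (It d P g) \<and> It d P g \<subseteq> P"
proof (induction g rule: lt_induct)
  case (1 g)
  show ?case
  proof (cases "\<exists>f. lt f g")
    case False
    have "It d P g = P" by (rule It_bot[OF False])
    thus ?thesis using P by simp
  next
    case True
    then obtain f0 where f0: "lt f0 g" by blast
    show ?thesis
    proof (cases "\<exists>y. ismax g y")
      case True
      then obtain y where y: "ismax g y" by blast
      hence "lt y g" unfolding ismax_def by blast
      hence IH: "closed (It d P y)" "It d P y \<subseteq> P" using 1 by auto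
      show ?thesis unfolding It_succ[OF y] using regD(1,2)[OF d IH(1)] IH by blast
    next
      case False
      have "closed (\<Inter>(It d P ` {f. lt f g}))" using 1 by (intro closed_Inter) blast
      moreover have "\<Inter>(It d P ` {f. lt f g}) \<subseteq> P" using 1 f0 by blast
      ultimately show ?thesis unfolding It_lim[OF f0 False] by blast
    qed
  qed
qed

lemma It_dec:
  assumes d: "regular_derivation d" and P: "closed P"
  shows "lt f g \<Longrightarrow> It d P g \<subseteq> It d P f"
proof (induction g arbitrary: f rule: lt_induct)
  case (1 g)
  show ?case
  proof (cases "\<exists>y. ismax g y")
    case True
    then obtain y where y: "ismax g y" by blast
    hence "f = y \<or> lt f y" "lt y g" using 1 unfolding ismax_def by blast+
    moreover have "It d P g \<subseteq> It d P y"
      unfolding It_succ[OF y] using regD(2)[OF d] It_closed_sub[OF d P] by blast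
    ultimately show ?thesis using 1 by blast
  next
    case False
    show ?thesis unfolding It_lim[OF 1(2) False] using 1(2) by blast
  qed
qed

lemma It_dec_le:
  assumes d: "regular_derivation d" and P: "closed P"
  shows "f = g \<or> lt f g \<Longrightarrow> It d P g \<subseteq> It d P f"
  using It_dec[OF d P] by blast

lemma It_mono:
  assumes d: "regular_derivation d" and P: "closed P" and Q: "closed Q" and PQ: "P \<subseteq> Q"
  shows "It d P g \<subseteq> It d Q g"
proof (induction g rule: lt_induct)
  case (1 g)
  show ?case
  proof (cases "\<exists>f. lt f g")
    case False
    have "It d P g = P" "It d Q g = Q" by (rule It_bot[OF False])+
    thus ?thesis using PQ by simp
  next
    case True
    then obtain f0 where f0: "lt f0 g" by blast
    show ?thesis
    proof (cases "\<exists>y. ismax g y")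
      case True
      then obtain y where y: "ismax g y" by blast
      hence "lt y g" unfolding ismax_def by blast
      hence IH: "It d P y \<subseteq> It d Q y" using 1 by auto
      show ?thesis unfolding It_succ[OF y]
        using regD(3)[OF d _ _ IH] It_closed_sub[OF d P] It_closed_sub[OF d Q] by blast
    next
      case False
      show ?thesis unfolding It_lim[OF f0 False] using 1 by blast
    qed
  qed
qed

lemma It_union:
  assumes d: "regular_derivation d" and P: "closed P" and Q: "closed Q"
  shows "It d (P \<union> Q) g \<subseteq> It d P g \<union> It d Q g"
proof (induction g rule: lt_induct)
  case (1 g)
  have PQ: "closed (P \<union> Q)" using P Q by blast
  show ?case
  proof (cases "\<exists>f. lt f g")
    case False
    have "It d P g = P" "It d Q g = Q" "It d (P \<union> Q) g = P \<union> Q" by (rule It_bot[OF False])+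
    thus ?thesis by simp
  next
    case True
    then obtain f0 where f0: "lt f0 g" by blast
    show ?thesis
    proof (cases "\<exists>y. ismax g y")
      case True
      then obtain y where y: "ismax g y" by blast
      hence "lt y g" unfolding ismax_def by blast
      hence IH: "It d (P \<union> Q) y \<subseteq> It d P y \<union> It d Q y" using 1 by auto
      have c: "closed (It d (P \<union> Q) y)" "closed (It d P y)" "closed (It d Q y)"
        using It_closed_sub[OF d PQ] It_closed_sub[OF d P] It_closed_sub[OF d Q] by blast+
      have "d (It d (P \<union> Q) y) \<subseteq> d (It d P y \<union> It d Q y)"
        using regD(3)[OF d c(1) _ IH] c by blast
      also have "\<dots> \<subseteq> d (It d P y) \<union> d (It d Q y)" using regD(4)[OF d c(2,3)] .
      finally show ?thesis unfolding It_succ[OF y] .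
    next
      case False
      have "\<Inter>(It d (P \<union> Q) ` {f. lt f g}) \<subseteq> (\<Inter>f\<in>{f. lt f g}. It d P f \<union> It d Q f)"
        using 1 by blast
      also have "\<dots> \<subseteq> (\<Inter>f\<in>{f. lt f g}. It d P f) \<union> (\<Inter>f\<in>{f. lt f g}. It d Q f)"
      proof (rule chain_inter[where le = "\<lambda>i j. i = j \<or> lt i j"])
        fix i j assume "i \<in> {f. lt f g}" "j \<in> {f. lt f g}"
        thus "(i = j \<or> lt i j) \<or> (j = i \<or> lt j i)" using lt_total lt_fs by blast
      next
        fix i j assume "i = j \<or> lt i j"
        thus "It d P j \<subseteq> It d P i \<and> It d Q j \<subseteq> It d Q i"
          using It_dec_le[OF d P] It_dec_le[OF d Q] by blast
      qed
      finally show ?thesis unfolding It_lim[OF f0 False] .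
    qed
  qed
qed

lemma It_reg:
  assumes d: "regular_derivation d"
  shows "regular_derivation (\<lambda>Q. It d Q g)"
  unfolding regular_derivation_def derivation_def
  by (intro conjI allI impI) (simp_all add: It_closed_sub[OF d] It_mono[OF d] It_union[OF d])

end


context wo
begin

definition pl :: "('i \<Rightarrow> nat) \<Rightarrow> ('i \<Rightarrow> nat) \<Rightarrow> ('i \<Rightarrow> nat)" where
  "pl f g = (\<lambda>x. f x + g x)"

definition ne :: "'i \<Rightarrow> nat \<Rightarrow> ('i \<Rightarrow> nat)" where
  "ne b n = (\<lambda>x. if x = b then n else 0)"

lemma fs_iff: "f \<in> fin_supp r \<longleftrightarrow> finite {x. f x \<noteq> 0} \<and> (\<forall>x. f x \<noteq> 0 \<longrightarrow> x \<in> Field r)"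
  unfolding fin_supp_def by simp

lemma fs_plus: assumes "f \<in> fin_supp r" "g \<in> fin_supp r" shows "pl f g \<in> fin_supp r"
proof -
  have "{x. pl f g x \<noteq> 0} \<subseteq> {x. f x \<noteq> 0} \<union> {x. g x \<noteq> 0}" unfolding pl_def by auto
  moreover have "finite ({x. f x \<noteq> 0} \<union> {x. g x \<noteq> 0})" using assms fs_iff by auto
  ultimately have "finite {x. pl f g x \<noteq> 0}" using finite_subset by blast
  moreover have "\<forall>x. pl f g x \<noteq> 0 \<longrightarrow> x \<in> Field r" using assms unfolding fs_iff pl_def by auto
  ultimately show ?thesis unfolding fs_iff by blast
qed

lemma fs_z: "(\<lambda>_. 0) \<in> fin_supp r"
  unfolding fs_iff by simp

lemma fs_ne: "b \<in> Field r \<Longrightarrow> ne b n \<in> fin_supp r"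
proof -
  assume b: "b \<in> Field r"
  have "{x. ne b n x \<noteq> 0} \<subseteq> {b}" unfolding ne_def by auto
  hence "finite {x. ne b n x \<noteq> 0}" using finite_subset by blast
  thus ?thesis unfolding fs_iff using b by (auto simp: ne_def split: if_splits)
qed

lemma tr:
  assumes "f \<in> fin_supp r" "h \<in> fin_supp r" "h' \<in> fin_supp r"
  shows "lt (pl f h) (pl f h') \<longleftrightarrow> lt h h'"
proof -
  have a: "pl f h \<in> fin_supp r" "pl f h' \<in> fin_supp r" using fs_plus assms by auto
  show ?thesis unfolding lt_def using assms a unfolding pl_def by simp
qed

lemma pl_zero[simp]: "pl f (\<lambda>_. 0) = f"
  unfolding pl_def by simp

lemma pl_inj: "pl f h = pl f h' \<Longrightarrow> h = h'"
  unfolding pl_def by (simp add: fun_eq_iff)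

lemma not_lt_zero: "\<not> lt h (\<lambda>_. 0)"
  unfolding lt_def by simp

lemma zero_lt: assumes "g \<in> fin_supp r" "g \<noteq> (\<lambda>_. 0)" shows "lt (\<lambda>_. 0) g"
  using lt_total[OF fs_z assms(1)] assms(2) not_lt_zero by metis

lemma low_closed:
  assumes "lt h g" "a \<in> Field r" "\<forall>x. g x \<noteq> 0 \<longrightarrow> (x,a) \<in> r"
  shows "\<forall>x. h x \<noteq> 0 \<longrightarrow> (x,a) \<in> r"
proof (intro allI impI, rule ccontr)
  fix z assume z: "h z \<noteq> 0" "(z,a) \<notin> r"
  obtain x where x: "x \<in> Field r" "h x < g x" "\<forall>y\<in>Field r. (x, y) \<in> r \<and> y \<noteq> x \<longrightarrow> h y = g y"
    using assms(1) unfolding lt_def by blast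
  have hs: "h \<in> fin_supp r" using assms(1) lt_fs by blast
  have zF: "z \<in> Field r" using hs z fs_iff by blast
  have za: "(a,z) \<in> r" "z \<noteq> a" using r_total[OF zF assms(2)] z r_refl assms(2) by auto
  have xa: "(x,a) \<in> r" using x assms(3) by (metis less_nat_zero_code)
  have "(x,z) \<in> r" using r_trans xa za by blast
  moreover have "z \<noteq> x" using xa z by blast
  ultimately have "h z = g z" using x zF by blast
  hence "g z \<noteq> 0" using z by simp
  hence "(z,a) \<in> r" using assms(3) by blast
  thus False using z by blast
qed

lemma decompose:
  assumes aF: "a \<in> Field r" and fs: "f \<in> fin_supp r" and gs: "g \<in> fin_supp r"
    and Hf: "\<forall>x. f x \<noteq> 0 \<longrightarrow> (a,x) \<in> r" and Hg: "\<forall>x. g x \<noteq> 0 \<longrightarrow> (x,a) \<in> r"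
    and k: "lt k (pl f g)"
  shows "k = f \<or> lt k f \<or> (\<exists>h. lt h g \<and> k = pl f h)"
proof (rule ccontr)
  assume nc: "\<not> (k = f \<or> lt k f \<or> (\<exists>h. lt h g \<and> k = pl f h))"
  have ks: "k \<in> fin_supp r" using k lt_fs by blast
  have fk: "lt f k" using lt_total[OF ks fs] nc by blast
  obtain w where w: "w \<in> Field r" "f w < k w" "\<forall>y\<in>Field r. (w, y) \<in> r \<and> y \<noteq> w \<longrightarrow> f y = k y"
    using fk unfolding lt_def by blast
  obtain v where v: "v \<in> Field r" "k v < pl f g v" "\<forall>y\<in>Field r. (v, y) \<in> r \<and> y \<noteq> v \<longrightarrow> k y = pl f g y"
    using k unfolding lt_def by blast
  have wa: "(w,a) \<in> r"
  proof (rule ccontr)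
    assume nwa: "(w,a) \<notin> r"
    have aw: "(a,w) \<in> r" using r_total[OF w(1) aF] nwa by blast
    have gw: "g w = 0" using Hg nwa by blast
    consider "v = w" | "(v,w) \<in> r" "w \<noteq> v" | "(w,v) \<in> r" "v \<noteq> w" using r_total[OF v(1) w(1)] by blast
    thus False
    proof cases
      case 1 thus False using v(2) w(2) gw unfolding pl_def by simp
    next
      case 2 hence "k w = f w + g w" using v w(1) unfolding pl_def by simp
      thus False using gw w(2) by simp
    next
      case 3
      have kv: "k v = f v" using w(3) v(1) 3 by simp
      have "(a,v) \<in> r" using r_trans aw 3(1) by blast
      moreover have "v \<noteq> a" using 3 nwa by blast
      ultimately have "(v,a) \<notin> r" using r_antisym by blast
      hence "g v = 0" using Hg by blast
      thus False using kv v(2) unfolding pl_def by simp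
    qed
  qed
  have le: "\<forall>x. f x \<le> k x"
  proof
    fix x show "f x \<le> k x"
    proof (cases "f x = 0")
      case True thus ?thesis by simp
    next
      case False
      have xF: "x \<in> Field r" using fs False fs_iff by blast
      have ax: "(a,x) \<in> r" using Hf False by blast
      consider "x = w" | "(w,x) \<in> r" "x \<noteq> w" | "(x,w) \<in> r" "x \<noteq> w" using r_total[OF xF w(1)] by blast
      thus ?thesis
      proof cases
        case 1 thus ?thesis using w by simp
      next
        case 2 thus ?thesis using w xF by simp
      next
        case 3
        have "(x,a) \<in> r" using r_trans 3(1) wa by blast
        hence "x = a" using r_antisym ax by blast
        hence "w = a" using 3(1) wa r_antisym by blast
        thus ?thesis using 3 \<open>x = a\<close> by simp
      qed
    qed
  qed
  define h where "h = (\<lambda>x. k x - f x)"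
  have kh: "k = pl f h" unfolding h_def pl_def using le by (simp add: fun_eq_iff)
  have "{x. h x \<noteq> 0} \<subseteq> {x. k x \<noteq> 0}" unfolding h_def by auto
  hence hs: "h \<in> fin_supp r" using ks unfolding fs_iff using finite_subset by blast
  have "lt h g" using k tr[OF fs hs gs] kh by simp
  thus False using nc kh by blast
qed

lemma f_le_pl:
  assumes "f \<in> fin_supp r" "h \<in> fin_supp r"
  shows "pl f h = f \<or> lt f (pl f h)"
proof (cases "h = (\<lambda>_. 0)")
  case True thus ?thesis by simp
next
  case False
  have "lt (\<lambda>_. 0) h" using zero_lt assms(2) False by blast
  hence "lt (pl f (\<lambda>_. 0)) (pl f h)" using tr[OF assms(1) fs_z assms(2)] by simp
  thus ?thesis by simp
qed

lemma shift:
  assumes d: "regular_derivation d" and P: "closed P"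
    and aF: "a \<in> Field r" and fs: "f \<in> fin_supp r" and Hf: "\<forall>x. f x \<noteq> 0 \<longrightarrow> (a,x) \<in> r"
  shows "g \<in> fin_supp r \<Longrightarrow> (\<forall>x. g x \<noteq> 0 \<longrightarrow> (x,a) \<in> r) \<Longrightarrow> It d P (pl f g) = It d (It d P f) g"
proof (induction g rule: lt_induct)
  case (1 g)
  note gs = 1(2) and Hg = 1(3)
  let ?Q = "It d P f"
  let ?z = "(\<lambda>_. 0) :: 'i \<Rightarrow> nat"
  have Qc: "closed ?Q" using It_closed_sub[OF d P] by blast
  have IH: "\<And>h. lt h g \<Longrightarrow> It d P (pl f h) = It d ?Q h"
    using 1(1) lt_fs low_closed[OF _ aF Hg] by blast
  have dec: "\<And>k. lt k (pl f g) \<Longrightarrow> k = f \<or> lt k f \<or> (\<exists>h. lt h g \<and> k = pl f h)"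
    using decompose[OF aF fs gs Hf Hg] by blast
  show ?case
  proof (cases "g = ?z")
    case True
    have "\<not>(\<exists>h. lt h g)" using not_lt_zero True by blast
    hence "It d ?Q g = ?Q" by (rule It_bot)
    thus ?thesis using True by simp
  next
    case False
    have z0: "lt ?z g" using zero_lt gs False by blast
    have fpg: "lt f (pl f g)" using tr[OF fs fs_z gs] z0 by simp
    show ?thesis
    proof (cases "\<exists>y. ismax g y")
      case True
      then obtain y where y: "ismax g y" by blast
      have yg: "lt y g" using y unfolding ismax_def by blast
      have ys: "y \<in> fin_supp r" using yg lt_fs by blast
      have m: "ismax (pl f g) (pl f y)"
        unfolding ismax_def
      proof (intro conjI allI impI)
        show "lt (pl f y) (pl f g)" using tr[OF fs ys gs] yg by simp
      next
        fix z assume z: "lt z (pl f g)"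
        have fy: "pl f y = f \<or> lt f (pl f y)" using f_le_pl[OF fs ys] .
        from dec[OF z] consider "z = f" | "lt z f" | h where "lt h g" "z = pl f h" by blast
        thus "z = pl f y \<or> lt z (pl f y)"
        proof cases
          case 1 thus ?thesis using fy by auto
        next
          case 2 thus ?thesis using fy lt_trans by metis
        next
          case 3
          have "h = y \<or> lt h y" using y 3(1) unfolding ismax_def by blast
          thus ?thesis using tr[OF fs _ ys] 3 lt_fs by blast
        qed
      qed
      have "It d P (pl f g) = d (It d P (pl f y))" using It_succ[OF m] .
      also have "\<dots> = d (It d ?Q y)" using IH[OF yg] by simp
      also have "\<dots> = It d ?Q g" by (rule It_succ[OF y, symmetric])
      finally show ?thesis .
    next
      case False
      have nm: "\<not> (\<exists>m. ismax (pl f g) m)"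
      proof
        assume "\<exists>m. ismax (pl f g) m"
        then obtain m where m: "ismax (pl f g) m" by blast
        have mlt: "lt m (pl f g)" using m unfolding ismax_def by blast
        obtain h where h: "lt h g" "m = pl f h"
        proof -
          from dec[OF mlt] consider "m = f" | "lt m f" | h where "lt h g" "m = pl f h" by blast
          thus thesis
          proof cases
            case 1 thus thesis using that[of ?z] z0 by simp
          next
            case 2
            have "f = m \<or> lt f m" using m fpg unfolding ismax_def by blast
            thus thesis using 2 lt_asym lt_irrefl by blast
          next
            case 3 thus thesis using that by blast
          qed
        qed
        have hs: "h \<in> fin_supp r" using h lt_fs by blast
        have "ismax g h"
          unfolding ismax_def
        proof (intro conjI allI impI)
          show "lt h g" using h by blast
        next
          fix z assume z: "lt z g"
          have zs: "z \<in> fin_supp r" using z lt_fs by blast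
          have "lt (pl f z) (pl f g)" using tr[OF fs zs gs] z by simp
          hence "pl f z = m \<or> lt (pl f z) m" using m unfolding ismax_def by blast
          thus "z = h \<or> lt z h" using h(2) pl_inj tr[OF fs zs hs] by blast
        qed
        thus False using False by blast
      qed
      have "It d P (pl f g) = \<Inter>(It d P ` {k. lt k (pl f g)})" using It_lim[OF fpg nm] .
      also have "\<dots> = (\<Inter>h\<in>{h. lt h g}. It d P (pl f h))"
      proof (rule cofinal_inter[where le = "\<lambda>i j. i = j \<or> lt i j"])
        fix t assume "t \<in> {h. lt h g}"
        hence "lt t g" by simp
        thus "pl f t \<in> {k. lt k (pl f g)}" using tr[OF fs _ gs] lt_fs by blast
      next
        fix s assume "s \<in> {k. lt k (pl f g)}"
        hence s: "lt s (pl f g)" by simp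
        from dec[OF s] consider "s = f" | "lt s f" | h where "lt h g" "s = pl f h" by blast
        thus "\<exists>t\<in>{h. lt h g}. s = pl f t \<or> lt s (pl f t)"
        proof cases
          case 1 thus ?thesis using z0 by (intro bexI[of _ ?z]) auto
        next
          case 2 thus ?thesis using z0 by (intro bexI[of _ ?z]) auto
        next
          case 3 thus ?thesis by blast
        qed
      next
        fix s c assume "s = c \<or> lt s c"
        thus "It d P c \<subseteq> It d P s" using It_dec_le[OF d P] by blast
      qed
      also have "\<dots> = (\<Inter>h\<in>{h. lt h g}. It d ?Q h)" using IH by simp
      also have "\<dots> = It d ?Q g" by (rule It_lim[OF z0 False, symmetric])
      finally show ?thesis .
    qed
  qed
qed

lemma ne_zero: "ne b 0 = (\<lambda>_. 0)"
  unfolding ne_def by auto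

lemma ne_suc: "ne b (Suc n) = pl (ne b n) (ne b 1)"
  unfolding ne_def pl_def by auto

lemma It_ne:
  assumes d: "regular_derivation d" and P: "closed P" and b: "b \<in> Field r"
  shows "It d P (ne b n) = ((\<lambda>Q. It d Q (ne b 1)) ^^ n) P"
proof (induction n)
  case 0
  have nz: "\<not>(\<exists>h. lt h (\<lambda>_. 0))" using not_lt_zero by blast
  show ?case unfolding ne_zero using It_bot[OF nz] by simp
next
  case (Suc n)
  have H: "\<forall>x. ne b n x \<noteq> 0 \<longrightarrow> (b,x) \<in> r" "\<forall>x. ne b 1 x \<noteq> 0 \<longrightarrow> (x,b) \<in> r"
    unfolding ne_def using r_refl b by auto
  have "It d P (ne b (Suc n)) = It d (It d P (ne b n)) (ne b 1)"
    unfolding ne_suc using shift[OF d P b fs_ne[OF b] H(1) fs_ne[OF b] H(2)] .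
  thus ?case using Suc by simp
qed

end


lemma comp_reg:
  fixes a b :: "'a::topological_space set \<Rightarrow> 'a set"
  assumes a: "regular_derivation a" and b: "regular_derivation b"
  shows "regular_derivation (\<lambda>P. a (b P))"
  unfolding regular_derivation_def derivation_def
proof (intro conjI allI impI)
  fix P :: "'a set" assume P: "closed P"
  show "closed (a (b P))" using regD(1)[OF a] regD(1)[OF b P] .
  show "a (b P) \<subseteq> P" using regD(2)[OF a regD(1)[OF b P]] regD(2)[OF b P] by blast
next
  fix P Q :: "'a set" assume P: "closed P" and Q: "closed Q" and PQ: "P \<subseteq> Q"
  show "a (b P) \<subseteq> a (b Q)"
    using regD(3)[OF a regD(1)[OF b P] regD(1)[OF b Q] regD(3)[OF b P Q PQ]] .
next
  fix P Q :: "'a set" assume P: "closed P" and Q: "closed Q"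
  have c: "closed (b P)" "closed (b Q)" "closed (b P \<union> b Q)" using regD(1)[OF b] P Q by blast+
  have "a (b (P \<union> Q)) \<subseteq> a (b P \<union> b Q)"
    using regD(3)[OF a regD(1)[OF b] c(3) regD(4)[OF b P Q]] P Q by blast
  also have "\<dots> \<subseteq> a (b P) \<union> a (b Q)" using regD(4)[OF a c(1,2)] .
  finally show "a (b (P \<union> Q)) \<subseteq> a (b P) \<union> a (b Q)" .
qed

lemma id_reg: "regular_derivation (\<lambda>P. P)"
  unfolding regular_derivation_def derivation_def by simp

lemma pow_reg: "regular_derivation e \<Longrightarrow> regular_derivation (e ^^ n)"
proof (induction n)
  case 0 thus ?case using id_reg by (simp add: id_def)
next
  case (Suc n)
  have "regular_derivation (\<lambda>P. e ((e ^^ n) P))" using comp_reg[OF Suc(2) Suc(1)[OF Suc(2)]] .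
  thus ?case by (simp add: o_def)
qed

lemma pow_dec:
  assumes e: "regular_derivation e" and P: "closed P" and mn: "m \<le> n"
  shows "(e ^^ n) P \<subseteq> (e ^^ m) P"
proof -
  obtain k where n: "n = k + m" using mn le_iff_add by (metis add.commute)
  have "(e ^^ n) P = (e ^^ k) ((e ^^ m) P)" unfolding n funpow_add by simp
  also have "\<dots> \<subseteq> (e ^^ m) P" using regD(2)[OF pow_reg[OF e] regD(1)[OF pow_reg[OF e] P]] .
  finally show ?thesis .
qed

lemma omega_key:
  assumes e1: "regular_derivation e1" and e2: "regular_derivation e2" and e3: "regular_derivation e3"
    and H: "\<And>Q. closed Q \<Longrightarrow> e1 Q \<subseteq> e2 Q \<union> e3 Q"
  shows "closed P \<Longrightarrow> n + m \<le> Suc k \<Longrightarrow> (e1 ^^ k) P \<subseteq> (e2 ^^ n) P \<union> (e3 ^^ m) P"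
proof (induction k arbitrary: P n m)
  case 0
  hence "n = 0 \<or> m = 0" by arith
  thus ?case by auto
next
  case (Suc k)
  note P = Suc(2)
  have sub: "(e1 ^^ Suc k) P \<subseteq> P" using regD(2)[OF pow_reg[OF e1] P] .
  show ?case
  proof (cases "n = 0 \<or> m = 0")
    case True thus ?thesis using sub by auto
  next
    case False
    then obtain n' m' where nm: "n = Suc n'" "m = Suc m'" by (metis not0_implies_Suc)
    have c2: "closed (e2 P)" and c3: "closed (e3 P)" using regD(1) e2 e3 P by blast+
    have "(e1 ^^ Suc k) P = (e1 ^^ k) (e1 P)" by (simp add: funpow_Suc_right del: funpow.simps)
    also have "\<dots> \<subseteq> (e1 ^^ k) (e2 P \<union> e3 P)"
      using regD(3)[OF pow_reg[OF e1] regD(1)[OF e1 P] _ H[OF P]] c2 c3 by blast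
    also have "\<dots> \<subseteq> (e1 ^^ k) (e2 P) \<union> (e1 ^^ k) (e3 P)" using regD(4)[OF pow_reg[OF e1] c2 c3] .
    also have "\<dots> \<subseteq> (e2 ^^ n) P \<union> (e3 ^^ m) P"
    proof -
      have "n' + m \<le> Suc k" using Suc(3) nm by simp
      hence "(e1 ^^ k) (e2 P) \<subseteq> (e2 ^^ n') (e2 P) \<union> (e3 ^^ m) (e2 P)"
        using Suc(1)[OF c2] by blast
      moreover have "(e2 ^^ n') (e2 P) = (e2 ^^ n) P" unfolding nm by (simp add: funpow_Suc_right del: funpow.simps)
      moreover have "(e3 ^^ m) (e2 P) \<subseteq> (e3 ^^ m) P"
        using regD(3)[OF pow_reg[OF e3] c2 P regD(2)[OF e2 P]] .
      moreover have "n + m' \<le> Suc k" using Suc(3) nm by simp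
      hence "(e1 ^^ k) (e3 P) \<subseteq> (e2 ^^ n) (e3 P) \<union> (e3 ^^ m') (e3 P)"
        using Suc(1)[OF c3] by blast
      moreover have "(e3 ^^ m') (e3 P) = (e3 ^^ m) P" unfolding nm by (simp add: funpow_Suc_right del: funpow.simps)
      moreover have "(e2 ^^ n) (e3 P) \<subseteq> (e2 ^^ n) P"
        using regD(3)[OF pow_reg[OF e2] c3 P regD(2)[OF e3 P]] .
      ultimately show ?thesis by blast
    qed
    finally show ?thesis .
  qed
qed

lemma omega_lemma:
  assumes e1: "regular_derivation e1" and e2: "regular_derivation e2" and e3: "regular_derivation e3"
    and H: "\<And>Q. closed Q \<Longrightarrow> e1 Q \<subseteq> e2 Q \<union> e3 Q" and P: "closed P"
  shows "(\<Inter>n. (e1 ^^ n) P) \<subseteq> (\<Inter>n. (e2 ^^ n) P) \<union> (\<Inter>n. (e3 ^^ n) P)"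
proof -
  have "(\<Inter>n. (e1 ^^ n) P) \<subseteq> (\<Inter>n. (e2 ^^ n) P \<union> (e3 ^^ n) P)"
  proof
    fix x assume x: "x \<in> (\<Inter>n. (e1 ^^ n) P)"
    show "x \<in> (\<Inter>n. (e2 ^^ n) P \<union> (e3 ^^ n) P)"
    proof
      fix n :: nat
      have "(e1 ^^ (n + n)) P \<subseteq> (e2 ^^ n) P \<union> (e3 ^^ n) P"
        using omega_key[OF e1 e2 e3 H P] by simp
      thus "x \<in> (e2 ^^ n) P \<union> (e3 ^^ n) P" using x by blast
    qed
  qed
  also have "\<dots> \<subseteq> (\<Inter>n. (e2 ^^ n) P) \<union> (\<Inter>n. (e3 ^^ n) P)"
  proof (rule chain_inter[where le = "(\<le>)"])
    fix i j :: nat show "i \<le> j \<or> j \<le> i" by linarith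
  next
    fix i j :: nat assume "i \<le> j"
    thus "(e2 ^^ j) P \<subseteq> (e2 ^^ i) P \<and> (e3 ^^ j) P \<subseteq> (e3 ^^ i) P"
      using pow_dec[OF e2 P] pow_dec[OF e3 P] by blast
  qed
  finally show ?thesis .
qed

context wo
begin

lemma lt_ne_intro:
  assumes b: "b \<in> Field r" and hs: "h \<in> fin_supp r" and sup: "\<forall>x. h x \<noteq> 0 \<longrightarrow> (x,b) \<in> r"
    and hb: "h b < m"
  shows "lt h (ne b m)"
  unfolding lt_def
proof (intro conjI bexI[of _ b])
  show "h \<in> fin_supp r" by fact
  show "ne b m \<in> fin_supp r" using fs_ne[OF b] .
  show "b \<in> Field r" by fact
  show "h b < ne b m b" using hb unfolding ne_def by simp
  show "\<forall>y\<in>Field r. (b, y) \<in> r \<and> y \<noteq> b \<longrightarrow> h y = ne b m y"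
  proof (intro ballI impI)
    fix y assume y: "y \<in> Field r" "(b, y) \<in> r \<and> y \<noteq> b"
    have "h y = 0" using sup y r_antisym by blast
    thus "h y = ne b m y" using y unfolding ne_def by simp
  qed
qed

lemma lt_e_iff:
  assumes a: "a \<in> Field r"
  shows "lt h (ne a 1) \<longleftrightarrow> h \<in> fin_supp r \<and> (\<forall>x. h x \<noteq> 0 \<longrightarrow> (x,a) \<in> r \<and> x \<noteq> a)"
proof
  assume H: "lt h (ne a 1)"
  have hs: "h \<in> fin_supp r" using H lt_fs by blast
  obtain x where x: "x \<in> Field r" "h x < ne a 1 x" "\<forall>y\<in>Field r. (x, y) \<in> r \<and> y \<noteq> x \<longrightarrow> h y = ne a 1 y"
    using H unfolding lt_def by blast
  have xa: "x = a" using x(2) unfolding ne_def by (cases "x = a") auto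
  have ha: "h a = 0" using x(2) xa unfolding ne_def by simp
  have "\<forall>z. h z \<noteq> 0 \<longrightarrow> (z,a) \<in> r \<and> z \<noteq> a"
  proof (intro allI impI)
    fix z assume z: "h z \<noteq> 0"
    have zF: "z \<in> Field r" using hs z fs_iff by blast
    have za: "z \<noteq> a" using z ha by blast
    have "(z,a) \<in> r"
    proof (rule ccontr)
      assume "(z,a) \<notin> r"
      hence "(a,z) \<in> r" using r_total[OF zF a] by blast
      hence "h z = ne a 1 z" using x(3) zF za xa by blast
      thus False using z za unfolding ne_def by simp
    qed
    thus "(z,a) \<in> r \<and> z \<noteq> a" using za by blast
  qed
  thus "h \<in> fin_supp r \<and> (\<forall>x. h x \<noteq> 0 \<longrightarrow> (x,a) \<in> r \<and> x \<noteq> a)" using hs by blast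
next
  assume H: "h \<in> fin_supp r \<and> (\<forall>x. h x \<noteq> 0 \<longrightarrow> (x,a) \<in> r \<and> x \<noteq> a)"
  have "h a = 0" using H by blast
  thus "lt h (ne a 1)" using lt_ne_intro[OF a] H by simp
qed

lemma e_min:
  assumes a: "a \<in> Field r" and mn: "\<forall>y\<in>Field r. (a,y) \<in> r"
  shows "It d P (ne a 1) = d P"
proof -
  let ?z = "(\<lambda>_. 0) :: 'i \<Rightarrow> nat"
  have "ismax (ne a 1) ?z"
    unfolding ismax_def
  proof (intro conjI allI impI)
    show "lt ?z (ne a 1)" using lt_e_iff[OF a] fs_z by simp
  next
    fix z assume z: "lt z (ne a 1)"
    have "z = ?z"
    proof
      fix x show "z x = 0"
      proof (rule ccontr)
        assume "z x \<noteq> 0"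
        hence "(x,a) \<in> r" "x \<noteq> a" "x \<in> Field r" using z lt_e_iff[OF a] fs_iff by blast+
        thus False using mn r_antisym by blast
      qed
    qed
    thus "z = ?z \<or> lt z ?z" by blast
  qed
  hence "It d P (ne a 1) = d (It d P ?z)" by (rule It_succ)
  moreover have "\<not>(\<exists>h. lt h ?z)" using not_lt_zero by blast
  hence "It d P ?z = P" by (rule It_bot)
  ultimately show ?thesis by simp
qed

lemma e_nonmin:
  assumes a: "a \<in> Field r" and c: "(c,a) \<in> r" "c \<noteq> a"
  shows "It d P (ne a 1) = \<Inter>(It d P ` {h. lt h (ne a 1)})"
proof -
  let ?z = "(\<lambda>_. 0) :: 'i \<Rightarrow> nat"
  have cF: "c \<in> Field r" using c r_field by blast
  have z0: "lt ?z (ne a 1)" using lt_e_iff[OF a] fs_z by simp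
  have "\<not>(\<exists>y. ismax (ne a 1) y)"
  proof
    assume "\<exists>y. ismax (ne a 1) y"
    then obtain y where y: "ismax (ne a 1) y" by blast
    have ylt: "lt y (ne a 1)" using y unfolding ismax_def by blast
    have ys: "y \<in> fin_supp r" using ylt lt_fs by blast
    let ?y = "pl y (ne c 1)"
    have y's: "?y \<in> fin_supp r" using fs_plus[OF ys fs_ne[OF cF]] .
    have "\<forall>x. ?y x \<noteq> 0 \<longrightarrow> (x,a) \<in> r \<and> x \<noteq> a"
    proof (intro allI impI)
      fix x assume "?y x \<noteq> 0"
      hence "y x \<noteq> 0 \<or> x = c" unfolding pl_def ne_def by (cases "x = c") auto
      thus "(x,a) \<in> r \<and> x \<noteq> a" using ylt lt_e_iff[OF a] c by blast
    qed
    hence "lt ?y (ne a 1)" using lt_e_iff[OF a] y's by blast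
    hence "?y = y \<or> lt ?y y" using y unfolding ismax_def by blast
    moreover have "lt y ?y"
    proof -
      have "ne c 1 \<noteq> ?z" unfolding ne_def by (metis one_neq_zero)
      hence "lt ?z (ne c 1)" using zero_lt fs_ne[OF cF] by blast
      thus ?thesis using tr[OF ys fs_z fs_ne[OF cF]] by simp
    qed
    ultimately show False using lt_asym lt_irrefl by metis
  qed
  thus ?thesis using It_lim[OF z0] by blast
qed

lemma e_pred:
  assumes d: "regular_derivation d" and P: "closed P"
    and a: "a \<in> Field r" and b: "(b,a) \<in> r" "b \<noteq> a" and pr: "\<forall>z. (z,a) \<in> r \<and> z \<noteq> a \<longrightarrow> (z,b) \<in> r"
  shows "It d P (ne a 1) = (\<Inter>n. It d P (ne b n))"
proof -
  have bF: "b \<in> Field r" using b r_field by blast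
  have "It d P (ne a 1) = \<Inter>(It d P ` {h. lt h (ne a 1)})" using e_nonmin[OF a b] .
  also have "\<dots> = (\<Inter>n\<in>UNIV. It d P (ne b n))"
  proof (rule cofinal_inter[where le = "\<lambda>i j. i = j \<or> lt i j"])
    fix n :: nat
    have "\<forall>x. ne b n x \<noteq> 0 \<longrightarrow> (x,a) \<in> r \<and> x \<noteq> a" unfolding ne_def using b by auto
    thus "ne b n \<in> {h. lt h (ne a 1)}" using lt_e_iff[OF a] fs_ne[OF bF] by blast
  next
    fix s assume "s \<in> {h. lt h (ne a 1)}"
    hence s: "s \<in> fin_supp r" "\<forall>x. s x \<noteq> 0 \<longrightarrow> (x,a) \<in> r \<and> x \<noteq> a" using lt_e_iff[OF a] by blast+
    have "\<forall>x. s x \<noteq> 0 \<longrightarrow> (x,b) \<in> r" using s(2) pr by blast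
    hence "lt s (ne b (Suc (s b)))" using lt_ne_intro[OF bF s(1)] by simp
    thus "\<exists>t\<in>UNIV. s = ne b t \<or> lt s (ne b t)" by blast
  next
    fix s c assume "s = c \<or> lt s c"
    thus "It d P c \<subseteq> It d P s" using It_dec_le[OF d P] by blast
  qed
  finally show ?thesis by simp
qed

lemma supp_max_above:
  assumes s: "s \<in> fin_supp r" "s \<noteq> (\<lambda>_. 0)"
  obtains m where "m \<in> Field r" "s m \<noteq> 0" "\<forall>x. s x \<noteq> 0 \<longrightarrow> (x,m) \<in> r"
proof -
  have fin: "finite {x. s x \<noteq> 0}" using s fs_iff by blast
  have ne: "{x. s x \<noteq> 0} \<noteq> {}" using s(2) by auto
  have sub: "{x. s x \<noteq> 0} \<subseteq> Field r" using s fs_iff by blast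
  obtain m where "m \<in> {x. s x \<noteq> 0}" "\<forall>z\<in>{x. s x \<noteq> 0}. (z,m) \<in> r"
    using finite_max[OF fin ne sub] by blast
  thus thesis using that sub by blast
qed

lemma cofinal_e:
  assumes s: "s \<in> fin_supp r" and sub: "\<forall>x. s x \<noteq> 0 \<longrightarrow> x \<in> S"
    and Sne: "S \<noteq> {}" and SF: "S \<subseteq> Field r"
    and nomax: "\<forall>m\<in>S. \<exists>z\<in>S. (z,m) \<notin> r"
    and Sdown: "\<forall>m z. m \<in> Field r \<longrightarrow> z \<in> S \<longrightarrow> (m,z) \<in> r \<longrightarrow> m \<in> S"
  shows "\<exists>z\<in>S. lt s (ne z 1)"
proof (cases "s = (\<lambda>_. 0)")
  case True
  obtain c where c: "c \<in> S" using Sne by blast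
  have "ne c 1 \<noteq> (\<lambda>_. 0)" unfolding ne_def by (metis one_neq_zero)
  hence "lt (\<lambda>_. 0) (ne c 1)" using zero_lt fs_ne c SF by blast
  thus ?thesis using True c by blast
next
  case False
  obtain m where m: "m \<in> Field r" "s m \<noteq> 0" "\<forall>x. s x \<noteq> 0 \<longrightarrow> (x,m) \<in> r"
    using supp_max_above[OF s False] by blast
  have mS: "m \<in> S" using sub m by blast
  obtain z where z: "z \<in> S" "(z,m) \<notin> r" using nomax mS by blast
  have zF: "z \<in> Field r" using z SF by blast
  have mz: "(m,z) \<in> r" using r_total[OF m(1) zF] z by blast
  have "\<forall>x. s x \<noteq> 0 \<longrightarrow> (x,z) \<in> r" using m(3) mz r_trans by blast
  moreover have "s z = 0" using m(3) z by blast
  ultimately have "lt s (ne z 1)" using lt_ne_intro[OF zF s] by simp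
  thus ?thesis using z by blast
qed

lemma e_limit:
  assumes d: "regular_derivation d" and P: "closed P"
    and a: "a \<in> Field r" and c: "(c,a) \<in> r" "c \<noteq> a"
    and np: "\<forall>b. (b,a) \<in> r \<and> b \<noteq> a \<longrightarrow> (\<exists>z. (z,a) \<in> r \<and> z \<noteq> a \<and> (z,b) \<notin> r)"
  shows "It d P (ne a 1) = (\<Inter>b\<in>{b. (b,a) \<in> r \<and> b \<noteq> a}. It d P (ne b 1))"
proof -
  let ?S = "{b. (b,a) \<in> r \<and> b \<noteq> a}"
  have "It d P (ne a 1) = \<Inter>(It d P ` {h. lt h (ne a 1)})" using e_nonmin[OF a c] .
  also have "\<dots> = (\<Inter>b\<in>?S. It d P (ne b 1))"
  proof (rule cofinal_inter[where le = "\<lambda>i j. i = j \<or> lt i j"])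
    fix b assume b: "b \<in> ?S"
    hence bF: "b \<in> Field r" using r_field by blast
    have "\<forall>x. ne b 1 x \<noteq> 0 \<longrightarrow> (x,a) \<in> r \<and> x \<noteq> a" unfolding ne_def using b by auto
    thus "ne b 1 \<in> {h. lt h (ne a 1)}" using lt_e_iff[OF a] fs_ne[OF bF] by blast
  next
    fix s assume "s \<in> {h. lt h (ne a 1)}"
    hence s: "s \<in> fin_supp r" "\<forall>x. s x \<noteq> 0 \<longrightarrow> (x,a) \<in> r \<and> x \<noteq> a" using lt_e_iff[OF a] by blast+
    have "\<exists>z\<in>?S. lt s (ne z 1)"
    proof (rule cofinal_e[OF s(1)])
      show "\<forall>x. s x \<noteq> 0 \<longrightarrow> x \<in> ?S" using s(2) by blast
      show "?S \<noteq> {}" using c by blast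
      show "?S \<subseteq> Field r" using r_field by blast
      show "\<forall>m\<in>?S. \<exists>z\<in>?S. (z,m) \<notin> r" using np by blast
      show "\<forall>m z. m \<in> Field r \<longrightarrow> z \<in> ?S \<longrightarrow> (m,z) \<in> r \<longrightarrow> m \<in> ?S"
      proof (intro allI impI)
        fix m z assume "m \<in> Field r" "z \<in> ?S" "(m,z) \<in> r"
        hence "(m,a) \<in> r" "z \<noteq> a" "(z,a) \<in> r" using r_trans by blast+
        moreover have "m \<noteq> a" using \<open>(m,z) \<in> r\<close> \<open>(z,a) \<in> r\<close> \<open>z \<noteq> a\<close> r_antisym by blast
        ultimately show "m \<in> ?S" by blast
      qed
    qed
    thus "\<exists>t\<in>?S. s = ne t 1 \<or> lt s (ne t 1)" by blast
  next
    fix s c assume "s = c \<or> lt s c"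
    thus "It d P c \<subseteq> It d P s" using It_dec_le[OF d P] by blast
  qed
  finally show ?thesis .
qed

end


context wo
begin

lemma Field_R: "Field (omega_exp r) = fin_supp r"
proof
  show "Field (omega_exp r) \<subseteq> fin_supp r" unfolding Field_def using R_iff by blast
next
  show "fin_supp r \<subseteq> Field (omega_exp r)"
  proof
    fix f assume "f \<in> fin_supp r"
    hence "(f,f) \<in> omega_exp r" using R_iff by blast
    thus "f \<in> Field (omega_exp r)" unfolding Field_def by blast
  qed
qed

lemma top_empty:
  fixes d :: "'a::topological_space set \<Rightarrow> 'a set"
  assumes "Field r = {}"
  shows "deriv_iter d (omega_exp r) P = d P"
proof -
  let ?z = "(\<lambda>_. 0) :: 'i \<Rightarrow> nat"
  have fs: "fin_supp r = {?z}"
  proof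
    show "fin_supp r \<subseteq> {?z}"
    proof
      fix f assume f: "f \<in> fin_supp r"
      have "f = ?z"
      proof
        fix x show "f x = 0" using f assms fs_iff by blast
      qed
      thus "f \<in> {?z}" by simp
    qed
    show "{?z} \<subseteq> fin_supp r" using fs_z by simp
  qed
  have mx: "is_max (omega_exp r) {?z} ?z" unfolding is_max_def using R_iff fs_z by simp
  have th: "(THE m. is_max (omega_exp r) {?z} m) = ?z"
    using mx unfolding is_max_def by blast
  have "\<not>(\<exists>h. lt h ?z)" using not_lt_zero by blast
  hence "It d P ?z = P" by (rule It_bot)
  thus ?thesis unfolding deriv_iter_def Field_R fs using mx th by auto
qed

lemma top_nonempty:
  fixes d :: "'a::topological_space set \<Rightarrow> 'a set"
  assumes "Field r \<noteq> {}"
  shows "deriv_iter d (omega_exp r) P = \<Inter>(It d P ` fin_supp r)"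
proof -
  obtain c where c: "c \<in> Field r" using assms by blast
  have nm: "\<not>(\<exists>m. is_max (omega_exp r) (fin_supp r) m)"
  proof
    assume "\<exists>m. is_max (omega_exp r) (fin_supp r) m"
    then obtain m where m: "m \<in> fin_supp r" "\<forall>z\<in>fin_supp r. (z,m) \<in> omega_exp r"
      unfolding is_max_def by blast
    let ?m = "pl m (ne c 1)"
    have ms: "?m \<in> fin_supp r" using fs_plus[OF m(1) fs_ne[OF c]] .
    have "ne c 1 \<noteq> (\<lambda>_. 0)" unfolding ne_def by (metis one_neq_zero)
    hence "lt (\<lambda>_. 0) (ne c 1)" using zero_lt fs_ne[OF c] by blast
    hence "lt m ?m" using tr[OF m(1) fs_z fs_ne[OF c]] by simp
    moreover have "?m = m \<or> lt ?m m" using m(2) ms R_iff by blast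
    ultimately show False using lt_asym lt_irrefl by metis
  qed
  have A: "(fin_supp r = {}) = False" using fs_z by blast
  have B: "(\<exists>m. is_max (omega_exp r) (fin_supp r) m) = False" using nm by blast
  show ?thesis unfolding deriv_iter_def Field_R A B if_False ..
qed

lemma top_max:
  assumes d: "regular_derivation d" and P: "closed P"
    and M: "M \<in> Field r" "\<forall>y\<in>Field r. (y,M) \<in> r"
  shows "deriv_iter d (omega_exp r) P = (\<Inter>n. It d P (ne M n))"
proof -
  have "deriv_iter d (omega_exp r) P = \<Inter>(It d P ` fin_supp r)" using top_nonempty M by blast
  also have "\<dots> = (\<Inter>n\<in>UNIV. It d P (ne M n))"
  proof (rule cofinal_inter[where le = "\<lambda>i j. i = j \<or> lt i j"])
    fix n :: nat show "ne M n \<in> fin_supp r" using fs_ne[OF M(1)] .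
  next
    fix s assume s: "s \<in> fin_supp r"
    have "\<forall>x. s x \<noteq> 0 \<longrightarrow> (x,M) \<in> r" using s fs_iff M by blast
    hence "lt s (ne M (Suc (s M)))" using lt_ne_intro[OF M(1) s] by simp
    thus "\<exists>t\<in>UNIV. s = ne M t \<or> lt s (ne M t)" by blast
  next
    fix s c assume "s = c \<or> lt s c"
    thus "It d P c \<subseteq> It d P s" using It_dec_le[OF d P] by blast
  qed
  finally show ?thesis by simp
qed

lemma top_nomax:
  assumes d: "regular_derivation d" and P: "closed P"
    and ne: "Field r \<noteq> {}" and nm: "\<forall>m\<in>Field r. \<exists>z\<in>Field r. (z,m) \<notin> r"
  shows "deriv_iter d (omega_exp r) P = (\<Inter>b\<in>Field r. It d P (ne b 1))"
proof -
  have "deriv_iter d (omega_exp r) P = \<Inter>(It d P ` fin_supp r)" using top_nonempty ne by blast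
  also have "\<dots> = (\<Inter>b\<in>Field r. It d P (ne b 1))"
  proof (rule cofinal_inter[where le = "\<lambda>i j. i = j \<or> lt i j"])
    fix b assume "b \<in> Field r" thus "ne b 1 \<in> fin_supp r" using fs_ne by blast
  next
    fix s assume s: "s \<in> fin_supp r"
    have "\<exists>z\<in>Field r. lt s (ne z 1)"
      by (rule cofinal_e[OF s]) (use s fs_iff ne nm r_field in blast)+
    thus "\<exists>t\<in>Field r. s = ne t 1 \<or> lt s (ne t 1)" by blast
  next
    fix s c assume "s = c \<or> lt s c"
    thus "It d P c \<subseteq> It d P s" using It_dec_le[OF d P] by blast
  qed
  finally show ?thesis .
qed

lemma block:
  assumes d1: "regular_derivation d1" and d2: "regular_derivation d2" and d3: "regular_derivation d3"
    and b: "b \<in> Field r"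
    and C: "\<forall>Q. closed Q \<longrightarrow> It d1 Q (ne b 1) \<subseteq> It d2 Q (ne b 1) \<union> It d3 Q (ne b 1)"
    and P: "closed P"
  shows "(\<Inter>n. It d1 P (ne b n)) \<subseteq> (\<Inter>n. It d2 P (ne b n)) \<union> (\<Inter>n. It d3 P (ne b n))"
  unfolding It_ne[OF d1 P b] It_ne[OF d2 P b] It_ne[OF d3 P b]
  by (rule omega_lemma[OF It_reg[OF d1] It_reg[OF d2] It_reg[OF d3] _ P]) (use C in blast)

lemma limblock:
  assumes d2: "regular_derivation d2" and d3: "regular_derivation d3"
    and S: "S \<subseteq> Field r" and P: "closed P"
    and C: "\<forall>b\<in>S. It d1 P (ne b 1) \<subseteq> It d2 P (ne b 1) \<union> It d3 P (ne b 1)"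
  shows "(\<Inter>b\<in>S. It d1 P (ne b 1)) \<subseteq> (\<Inter>b\<in>S. It d2 P (ne b 1)) \<union> (\<Inter>b\<in>S. It d3 P (ne b 1))"
proof -
  have "(\<Inter>b\<in>S. It d1 P (ne b 1)) \<subseteq> (\<Inter>b\<in>S. It d2 P (ne b 1) \<union> It d3 P (ne b 1))"
    using C by blast
  also have "\<dots> \<subseteq> (\<Inter>b\<in>S. It d2 P (ne b 1)) \<union> (\<Inter>b\<in>S. It d3 P (ne b 1))"
  proof (rule chain_inter[where le = "\<lambda>i j. (i,j) \<in> r"])
    fix i j assume "i \<in> S" "j \<in> S" thus "(i,j) \<in> r \<or> (j,i) \<in> r" using r_total S by blast
  next
    fix i j assume ij: "i \<in> S" "j \<in> S" "(i,j) \<in> r"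
    have jF: "j \<in> Field r" "i \<in> Field r" using ij S by blast+
    have "ne i 1 = ne j 1 \<or> lt (ne i 1) (ne j 1)"
    proof (cases "i = j")
      case True thus ?thesis by simp
    next
      case False
      have "\<forall>x. ne i 1 x \<noteq> 0 \<longrightarrow> (x,j) \<in> r" unfolding ne_def using ij by auto
      moreover have "ne i 1 j < 1" unfolding ne_def using False by simp
      ultimately show ?thesis using lt_ne_intro[OF jF(1) fs_ne[OF jF(2)]] by blast
    qed
    thus "It d2 P (ne j 1) \<subseteq> It d2 P (ne i 1) \<and> It d3 P (ne j 1) \<subseteq> It d3 P (ne i 1)"
      using It_dec_le[OF d2 P] It_dec_le[OF d3 P] by blast
  qed
  finally show ?thesis .
qed

lemma main_e:
  assumes d1: "regular_derivation d1" and d2: "regular_derivation d2" and d3: "regular_derivation d3"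
    and H: "\<forall>P. closed P \<longrightarrow> d1 P \<subseteq> d2 P \<union> d3 P"
  shows "a \<in> Field r \<Longrightarrow> \<forall>P. closed P \<longrightarrow> It d1 P (ne a 1) \<subseteq> It d2 P (ne a 1) \<union> It d3 P (ne a 1)"
proof (induction a rule: wf_induct_rule[OF r_wf])
  case (1 a)
  note a = 1(2)
  have IH: "\<And>b. (b,a) \<in> r \<Longrightarrow> b \<noteq> a \<Longrightarrow>
      \<forall>P. closed P \<longrightarrow> It d1 P (ne b 1) \<subseteq> It d2 P (ne b 1) \<union> It d3 P (ne b 1)"
    using 1(1) r_field by blast
  show ?case
  proof (intro allI impI)
    fix P :: "'a set" assume P: "closed P"
    show "It d1 P (ne a 1) \<subseteq> It d2 P (ne a 1) \<union> It d3 P (ne a 1)"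
    proof (cases "\<forall>y\<in>Field r. (a,y) \<in> r")
      case True
      thus ?thesis unfolding e_min[OF a True] using H P by blast
    next
      case False
      then obtain c where c: "c \<in> Field r" "(a,c) \<notin> r" by blast
      have ca: "(c,a) \<in> r" "c \<noteq> a" using r_total[OF c(1) a] c r_refl a by auto
      show ?thesis
      proof (cases "\<exists>b. (b,a) \<in> r \<and> b \<noteq> a \<and> (\<forall>z. (z,a) \<in> r \<and> z \<noteq> a \<longrightarrow> (z,b) \<in> r)")
        case True
        then obtain b where b: "(b,a) \<in> r" "b \<noteq> a" "\<forall>z. (z,a) \<in> r \<and> z \<noteq> a \<longrightarrow> (z,b) \<in> r" by blast
        have bF: "b \<in> Field r" using b r_field by blast
        show ?thesis
          unfolding e_pred[OF d1 P a b] e_pred[OF d2 P a b] e_pred[OF d3 P a b]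
          using block[OF d1 d2 d3 bF IH[OF b(1,2)] P] .
      next
        case False
        hence np: "\<forall>b. (b,a) \<in> r \<and> b \<noteq> a \<longrightarrow> (\<exists>z. (z,a) \<in> r \<and> z \<noteq> a \<and> (z,b) \<notin> r)" by blast
        show ?thesis
          unfolding e_limit[OF d1 P a ca np] e_limit[OF d2 P a ca np] e_limit[OF d3 P a ca np]
          by (rule limblock[OF d2 d3 _ P]) (use IH P r_field in blast)+
      qed
    qed
  qed
qed

lemma main_top:
  assumes d1: "regular_derivation d1" and d2: "regular_derivation d2" and d3: "regular_derivation d3"
    and H: "\<forall>P. closed P \<longrightarrow> d1 P \<subseteq> d2 P \<union> d3 P" and P: "closed P"
  shows "deriv_iter d1 (omega_exp r) P \<subseteq> deriv_iter d2 (omega_exp r) P \<union> deriv_iter d3 (omega_exp r) P"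
proof (cases "Field r = {}")
  case True
  thus ?thesis unfolding top_empty[OF True] using H P by blast
next
  case False
  note C = main_e[OF d1 d2 d3 H]
  show ?thesis
  proof (cases "\<exists>M\<in>Field r. \<forall>y\<in>Field r. (y,M) \<in> r")
    case True
    then obtain M where M: "M \<in> Field r" "\<forall>y\<in>Field r. (y,M) \<in> r" by blast
    show ?thesis
      unfolding top_max[OF d1 P M] top_max[OF d2 P M] top_max[OF d3 P M]
      using block[OF d1 d2 d3 M(1) C[OF M(1)] P] .
  next
    case nmax: False
    hence nm: "\<forall>m\<in>Field r. \<exists>z\<in>Field r. (z,m) \<notin> r" by blast
    show ?thesis
      unfolding top_nomax[OF d1 P False nm] top_nomax[OF d2 P False nm] top_nomax[OF d3 P False nm]
      by (rule limblock[OF d2 d3 _ P]) (use C P in blast)+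
  qed
qed

end

theorem proposition4p2:
  fixes \<delta>1 \<delta>2 \<delta>3 :: "'x::polish_space set \<Rightarrow> 'x set"
    and r :: "'i rel"
  assumes "regular_derivation \<delta>1" "regular_derivation \<delta>2" "regular_derivation \<delta>3"
    and "\<forall>P. closed P \<longrightarrow> \<delta>1 P \<subseteq> \<delta>2 P \<union> \<delta>3 P"
    and "Well_order r" "countable (Field r)"
    and "closed P"
  shows "deriv_iter \<delta>1 (omega_exp r) P
           \<subseteq> deriv_iter \<delta>2 (omega_exp r) P \<union> deriv_iter \<delta>3 (omega_exp r) P"
proof -
  interpret wo r using assms(5) by unfold_locales
  show ?thesis using main_top[OF assms(1-4) assms(7)] .
qed


end
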